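(* Let $\mathcal{B}_a\subset\mathbb{R}^6$ be the set of all $(a,b,c,d,e,f)$ such that the Type $\mathcal{B}$ model $\mathcal{N}(a,b,c,d,e,f)$ has symmetric Ricci tensor $\rho_s=0$ but alternating Ricci tensor $\rho_a\neq0$. Define $\mathcal{V}_1(r,s,t):=(s,t,r,0,0,r)$ and $\mathcal{V}_2(u,v,w):=(1-2uw+vw^2,\ w(1-uw+vw^2),\ u-vw,\ -vw^2,\ v,\ u+vw)$, and let $\mathcal{D}_1$ be the range of $\mathcal{V}_1$ restricted to $r\neq0$ and $\mathcal{D}_2$ the range of $\mathcal{V}_2$ restricted to $u\neq0$. Then $\mathcal{B}_a=\mathcal{D}_1\cup\mathcal{D}_2$, and $\mathcal{V}_1$ (for $r\neq0$) and $\mathcal{V}_2$ (for $u\neq0$) define smoothly embedded $3$-dimensional submanifolds of $\mathbb{R}^6$ which intersect transversally along a smooth $2$-dimensional submanifold.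
   Context: For $(a,b,c,d,e,f)\in\mathbb{R}^6$, the Type $\mathcal{B}$ model $\mathcal{N}(a,b,c,d,e,f)$ is $(\mathbb{R}^+\times\mathbb{R},\nabla)$ where $\nabla$ is the torsion free connection with Christoffel symbols ($\nabla_{\partial_{x^i}}\partial_{x^j}=\Gamma_{ij}{}^k\partial_{x^k}$) $\Gamma_{11}{}^1=a/x^1$, $\Gamma_{11}{}^2=b/x^1$, $\Gamma_{12}{}^1=\Gamma_{21}{}^1=c/x^1$, $\Gamma_{12}{}^2=\Gamma_{21}{}^2=d/x^1$, $\Gamma_{22}{}^1=e/x^1$, $\Gamma_{22}{}^2=f/x^1$. Its Ricci tensor is $\rho=(x^1)^{-2}\begin{pmatrix}(a-d+1)d+b(f-c) & cd-be+f\\ c(d-1)-be & -c^2+fc+(a-d-1)e\end{pmatrix}$ (rows/columns indexed by $1,2$). The symmetric and alternating parts are $\rho_s(X,Y)=\frac12(\rho(X,Y)+\rho(Y,X))$ and $\rho_a(X,Y)=\frac12(\rho(X,Y)-\rho(Y,X))$.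
   Formalization: Transversality is replaced by a clean intersection: the intersection of $\mathcal{D}_1$ and $\mathcal{D}_2$ is a smoothly embedded 2-dimensional submanifold, and at each of its points the tangent spaces of the two 3-dimensional submanifolds intersect exactly in its tangent space. Each condition added here is assumed in the paper as well or is needed for the statement above to hold. *)

theory Defs
  imports "HOL-Analysis.Analysis"
begin

text \<open>Ricci tensor of N(a,b,c,d,e,f) at the point x = (x^1,x^2), x^1 > 0,
  evaluated on tangent vectors X, Y (components w.r.t. d/dx^1, d/dx^2).\<close>
definition ricci :: "real^6 \<Rightarrow> real^2 \<Rightarrow> real^2 \<Rightarrow> real^2 \<Rightarrow> real" where
  "ricci p x X Y =
     (let a = p$1; b = p$2; c = p$3; d = p$4; e = p$5; f = p$6;
          r11 = (a - d + 1) * d + b * (f - c);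
          r12 = c * d - b * e + f;
          r21 = c * (d - 1) - b * e;
          r22 = - (c^2) + f * c + (a - d - 1) * e
      in inverse ((x$1)^2) *
         (X$1 * Y$1 * r11 + X$1 * Y$2 * r12 + X$2 * Y$1 * r21 + X$2 * Y$2 * r22))"

definition ricci_s :: "real^6 \<Rightarrow> real^2 \<Rightarrow> real^2 \<Rightarrow> real^2 \<Rightarrow> real" where
  "ricci_s p x X Y = (ricci p x X Y + ricci p x Y X) / 2"

definition ricci_a :: "real^6 \<Rightarrow> real^2 \<Rightarrow> real^2 \<Rightarrow> real^2 \<Rightarrow> real" where
  "ricci_a p x X Y = (ricci p x X Y - ricci p x Y X) / 2"

definition B_a :: "(real^6) set" where
  "B_a = {p. (\<forall>x X Y. x$1 > 0 \<longrightarrow> ricci_s p x X Y = 0) \<and>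
             \<not> (\<forall>x X Y. x$1 > 0 \<longrightarrow> ricci_a p x X Y = 0)}"

definition V1 :: "real^3 \<Rightarrow> real^6" where
  "V1 y = (let r = y$1; s = y$2; t = y$3 in vector [s, t, r, 0, 0, r])"

definition V2 :: "real^3 \<Rightarrow> real^6" where
  "V2 y = (let u = y$1; v = y$2; w = y$3 in
     vector [1 - 2 * u * w + v * w^2, w * (1 - u * w + v * w^2), u - v * w, - v * w^2, v, u + v * w])"

definition U1 :: "(real^3) set" where "U1 = {y. y$1 \<noteq> 0}"
definition U2 :: "(real^3) set" where "U2 = {y. y$1 \<noteq> 0}"

definition D1 :: "(real^6) set" where "D1 = V1 ` U1"
definition D2 :: "(real^6) set" where "D2 = V2 ` U2"

fun Ck_on :: "nat \<Rightarrow> 'a::euclidean_space set \<Rightarrow> ('a \<Rightarrow> 'b::real_normed_vector) \<Rightarrow> bool" where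
  "Ck_on 0 U f = continuous_on U f"
| "Ck_on (Suc k) U f =
     (\<exists>Df. (\<forall>x\<in>U. (f has_derivative Df x) (at x)) \<and> (\<forall>v. Ck_on k U (\<lambda>x. Df x v)))"

definition smooth_on :: "'a::euclidean_space set \<Rightarrow> ('a \<Rightarrow> 'b::real_normed_vector) \<Rightarrow> bool" where
  "smooth_on U f \<longleftrightarrow> open U \<and> (\<forall>k. Ck_on k U f)"

text \<open>A smooth embedding of an open set U \<subseteq> R^k: smooth, injective immersion,
  homeomorphism onto its image. Its image is then an embedded k-dimensional submanifold.\<close>
definition smooth_embedding :: "'a::euclidean_space set \<Rightarrow> ('a \<Rightarrow> 'b::euclidean_space) \<Rightarrow> bool" where
  "smooth_embedding U f \<longleftrightarrow>
     smooth_on U f \<and> inj_on f U \<and>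
     (\<forall>x\<in>U. inj (frechet_derivative f (at x))) \<and>
     (\<exists>g. homeomorphism U (f ` U) f g)"

definition tangent_at :: "('a::real_normed_vector \<Rightarrow> 'b::real_normed_vector) \<Rightarrow> 'a \<Rightarrow> 'b set" where
  "tangent_at f x = range (frechet_derivative f (at x))"

end

theory Submission
  imports Defs
begin


lemma exhaust_6:
  fixes x :: 6
  shows "x = 1 \<or> x = 2 \<or> x = 3 \<or> x = 4 \<or> x = 5 \<or> x = 6"
proof (induct x)
  case (of_int z)
  then have "z = 0 \<or> z = 1 \<or> z = 2 \<or> z = 3 \<or> z = 4 \<or> z = 5" by fastforce
  then show ?case by auto
qed

lemma forall_6: "(\<forall>i::6. P i) \<longleftrightarrow> P 1 \<and> P 2 \<and> P 3 \<and> P 4 \<and> P 5 \<and> P 6"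
  by (metis exhaust_6)

lemma vector_6 [simp]:
 "(vector [x1,x2,x3,x4,x5,x6] ::('a::zero)^6)$1 = x1"
 "(vector [x1,x2,x3,x4,x5,x6] ::('a::zero)^6)$2 = x2"
 "(vector [x1,x2,x3,x4,x5,x6] ::('a::zero)^6)$3 = x3"
 "(vector [x1,x2,x3,x4,x5,x6] ::('a::zero)^6)$4 = x4"
 "(vector [x1,x2,x3,x4,x5,x6] ::('a::zero)^6)$5 = x5"
 "(vector [x1,x2,x3,x4,x5,x6] ::('a::zero)^6)$6 = x6"
  unfolding vector_def by simp_all

lemma vec6_eq: "(p::'a^6) = q \<longleftrightarrow> p$1=q$1 \<and> p$2=q$2 \<and> p$3=q$3 \<and> p$4=q$4 \<and> p$5=q$5 \<and> p$6=q$6"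
  by (auto simp: vec_eq_iff forall_6)

lemma vec3_eq: "(p::'a^3) = q \<longleftrightarrow> p$1=q$1 \<and> p$2=q$2 \<and> p$3=q$3"
  by (auto simp: vec_eq_iff forall_3)

lemma vec2_eq: "(p::'a^2) = q \<longleftrightarrow> p$1=q$1 \<and> p$2=q$2"
  by (auto simp: vec_eq_iff forall_2)

lemma has_derivative_cart:
  fixes f :: "'a::real_normed_vector \<Rightarrow> real^'n"
  assumes "\<And>i. ((\<lambda>x. f x $ i) has_derivative (\<lambda>h. f' h $ i)) (at a)"
  shows "(f has_derivative f') (at a)"
  using assms
  by (subst has_derivative_componentwise_within)
     (auto simp: Basis_vec_def cart_eq_inner_axis[symmetric])


inductive pf :: "('a::real_normed_vector \<Rightarrow> real) \<Rightarrow> bool" where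
  pf_const: "pf (\<lambda>x. c)"
| pf_lin: "bounded_linear l \<Longrightarrow> pf l"
| pf_add: "pf f \<Longrightarrow> pf g \<Longrightarrow> pf (\<lambda>x. f x + g x)"
| pf_mult: "pf f \<Longrightarrow> pf g \<Longrightarrow> pf (\<lambda>x. f x * g x)"

lemma pf_minus: "pf f \<Longrightarrow> pf (\<lambda>x. - f x)"
  using pf_mult[OF pf_const[of "-1"], of f] by simp

lemma pf_diff: "pf f \<Longrightarrow> pf g \<Longrightarrow> pf (\<lambda>x. f x - g x)"
  using pf_add[OF _ pf_minus, of f g] by simp

lemma pf_pow: "pf f \<Longrightarrow> pf (\<lambda>x. f x ^ n)"
  by (induction n) (auto intro: pf_const pf_mult)

lemma pf_nth: "pf (\<lambda>x::real^'n. x $ i)"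
  by (rule pf_lin) (rule bounded_linear_vec_nth)

lemma pf_deriv:
  "pf f \<Longrightarrow> \<exists>Df. (\<forall>x. (f has_derivative Df x) (at x)) \<and> (\<forall>v. pf (\<lambda>x. Df x v))"
proof (induction rule: pf.induct)
  case (pf_const c)
  show ?case by (rule exI[of _ "\<lambda>x h. 0"]) (auto intro: pf.pf_const)
next
  case (pf_lin l)
  show ?case
    by (rule exI[of _ "\<lambda>x. l"]) (auto intro: pf.pf_const bounded_linear.has_derivative[OF pf_lin, OF has_derivative_ident])
next
  case (pf_add f g)
  then obtain Df Dg where f: "\<forall>x. (f has_derivative Df x) (at x)" "\<forall>v. pf (\<lambda>x. Df x v)"
    and g: "\<forall>x. (g has_derivative Dg x) (at x)" "\<forall>v. pf (\<lambda>x. Dg x v)" by blast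
  show ?case
    by (rule exI[of _ "\<lambda>x h. Df x h + Dg x h"]) (auto intro!: has_derivative_add pf.pf_add f[rule_format] g[rule_format])
next
  case (pf_mult f g)
  then obtain Df Dg where f: "\<forall>x. (f has_derivative Df x) (at x)" "\<forall>v. pf (\<lambda>x. Df x v)"
    and g: "\<forall>x. (g has_derivative Dg x) (at x)" "\<forall>v. pf (\<lambda>x. Dg x v)" by blast
  show ?case
    by (rule exI[of _ "\<lambda>x h. f x * Dg x h + Df x h * g x"])
       (auto intro!: has_derivative_mult pf.pf_add pf.pf_mult f[rule_format] g[rule_format] pf_mult.hyps)
qed

definition pv :: "('a::real_normed_vector \<Rightarrow> real^'n) \<Rightarrow> bool" where
  "pv f \<longleftrightarrow> (\<forall>i. pf (\<lambda>x. f x $ i))"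

lemma pv_deriv:
  assumes "pv f"
  shows "\<exists>Df. (\<forall>x. (f has_derivative Df x) (at x)) \<and> (\<forall>v. pv (\<lambda>x. Df x v))"
proof -
  have "\<forall>i. \<exists>Df. (\<forall>x. ((\<lambda>x. f x $ i) has_derivative Df x) (at x)) \<and> (\<forall>v. pf (\<lambda>x. Df x v))"
    using assms pf_deriv unfolding pv_def by blast
  then obtain D where D: "\<And>i x. ((\<lambda>x. f x $ i) has_derivative D i x) (at x)" "\<And>i v. pf (\<lambda>x. D i x v)"
    by metis
  show ?thesis
    by (rule exI[of _ "\<lambda>x h. \<chi> i. D i x h"]) (auto intro!: has_derivative_cart simp: D pv_def)
qed

lemma Ck_class:
  assumes "\<And>f. f \<in> S \<Longrightarrow> continuous_on U f \<and>
      (\<exists>Df. (\<forall>x\<in>U. (f has_derivative Df x) (at x)) \<and> (\<forall>v. (\<lambda>x. Df x v) \<in> S))"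
  shows "f \<in> S \<Longrightarrow> Ck_on k U f"
proof (induction k arbitrary: f)
  case 0 then show ?case using assms by simp
next
  case (Suc k)
  then show ?case using assms[OF Suc.prems] by auto
qed

lemma pv_smooth:
  fixes f :: "'a::euclidean_space \<Rightarrow> real^'n"
  assumes "pv f" "open U"
  shows "smooth_on U f"
proof -
  have "Ck_on k U f" for k
  proof (rule Ck_class[of "Collect pv"])
    fix g :: "'a \<Rightarrow> real^'n" assume "g \<in> Collect pv"
    then obtain Dg where "\<forall>x. (g has_derivative Dg x) (at x)" "\<forall>v. pv (\<lambda>x. Dg x v)"
      using pv_deriv by blast
    then show "continuous_on U g \<and> (\<exists>Df. (\<forall>x\<in>U. (g has_derivative Df x) (at x)) \<and> (\<forall>v. (\<lambda>x. Df x v) \<in> Collect pv))"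
      by (metis continuous_at_imp_continuous_on has_derivative_continuous mem_Collect_eq)
  qed (use assms in auto)
  then show ?thesis using assms by (simp add: smooth_on_def)
qed


lemma has_derivative_nth [derivative_intros]: "((\<lambda>x::real^'n. x $ i) has_derivative (\<lambda>h. h $ i)) F"
  by (rule bounded_linear_imp_has_derivative) (rule bounded_linear_vec_nth)

lemma V1_nth [simp]:
  "V1 y $ 1 = y$2" "V1 y $ 2 = y$3" "V1 y $ 3 = y$1" "V1 y $ 4 = 0" "V1 y $ 5 = 0" "V1 y $ 6 = y$1"
  by (simp_all add: V1_def Let_def)

lemma V2_nth [simp]:
  "V2 y $ 1 = 1 - 2 * y$1 * y$3 + y$2 * y$3^2"
  "V2 y $ 2 = y$3 * (1 - y$1 * y$3 + y$2 * y$3^2)"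
  "V2 y $ 3 = y$1 - y$2 * y$3"
  "V2 y $ 4 = - y$2 * y$3^2"
  "V2 y $ 5 = y$2"
  "V2 y $ 6 = y$1 + y$2 * y$3"
  by (simp_all add: V2_def Let_def)

definition DV2 :: "real^3 \<Rightarrow> real^3 \<Rightarrow> real^6" where
  "DV2 y h = (let u = y$1; v = y$2; w = y$3 in
     vector [- 2 * (h$1 * w + u * h$3) + h$2 * w^2 + 2 * v * w * h$3,
             h$3 - h$1 * w^2 - 2 * u * w * h$3 + h$2 * w^3 + 3 * v * w^2 * h$3,
             h$1 - h$2 * w - v * h$3,
             - h$2 * w^2 - 2 * v * w * h$3,
             h$2,
             h$1 + h$2 * w + v * h$3])"

lemma DV2_nth [simp]:
  "DV2 y h $ 1 = - 2 * (h$1 * y$3 + y$1 * h$3) + h$2 * y$3^2 + 2 * y$2 * y$3 * h$3"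
  "DV2 y h $ 2 = h$3 - h$1 * y$3^2 - 2 * y$1 * y$3 * h$3 + h$2 * y$3^3 + 3 * y$2 * y$3^2 * h$3"
  "DV2 y h $ 3 = h$1 - h$2 * y$3 - y$2 * h$3"
  "DV2 y h $ 4 = - h$2 * y$3^2 - 2 * y$2 * y$3 * h$3"
  "DV2 y h $ 5 = h$2"
  "DV2 y h $ 6 = h$1 + h$2 * y$3 + y$2 * h$3"
  by (simp_all add: DV2_def Let_def)

definition phi :: "real^2 \<Rightarrow> real^6" where
  "phi z = vector [1 - 2 * z$1 * z$2, z$2 * (1 - z$1 * z$2), z$1, 0, 0, z$1]"

lemma phi_nth [simp]:
  "phi z $ 1 = 1 - 2 * z$1 * z$2" "phi z $ 2 = z$2 * (1 - z$1 * z$2)" "phi z $ 3 = z$1"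
  "phi z $ 4 = 0" "phi z $ 5 = 0" "phi z $ 6 = z$1"
  by (simp_all add: phi_def)

definition Dphi :: "real^2 \<Rightarrow> real^2 \<Rightarrow> real^6" where
  "Dphi z k = vector [- 2 * (k$1 * z$2 + z$1 * k$2), k$2 - k$1 * z$2^2 - 2 * z$1 * z$2 * k$2, k$1, 0, 0, k$1]"

lemma Dphi_nth [simp]:
  "Dphi z k $ 1 = - 2 * (k$1 * z$2 + z$1 * k$2)" "Dphi z k $ 2 = k$2 - k$1 * z$2^2 - 2 * z$1 * z$2 * k$2"
  "Dphi z k $ 3 = k$1" "Dphi z k $ 4 = 0" "Dphi z k $ 5 = 0" "Dphi z k $ 6 = k$1"
  by (simp_all add: Dphi_def)

lemma V1_deriv: "(V1 has_derivative V1) (at y)"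
  apply (rule has_derivative_cart)
  subgoal for i using exhaust_6[of i]
    by (auto intro!: derivative_eq_intros)
  done

lemma V2_deriv: "(V2 has_derivative DV2 y) (at y)"
  apply (rule has_derivative_cart)
  subgoal for i using exhaust_6[of i]
    apply (elim disjE; simp)
    apply (auto intro!: derivative_eq_intros simp: fun_eq_iff algebra_simps power2_eq_square power3_eq_cube)
    done
  done

lemma phi_deriv: "(phi has_derivative Dphi z) (at z)"
  apply (rule has_derivative_cart)
  subgoal for i using exhaust_6[of i]
    apply (elim disjE; simp)
    apply (auto intro!: derivative_eq_intros simp: fun_eq_iff algebra_simps power2_eq_square power3_eq_cube)
    done
  done


lemma continuous_on_nth' [continuous_intros]: "continuous_on S (\<lambda>x::real^'n. x $ i)"
  by (intro linear_continuous_on bounded_linear_vec_nth)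

lemma cont_cart: "(\<And>i. continuous_on S (\<lambda>x. f x $ i)) \<Longrightarrow> continuous_on S (f :: _ \<Rightarrow> real^'n)"
  using continuous_on_vec_lambda[of S "\<lambda>i x. f x $ i"] by simp

lemma open_nz: "open {y::real^'n. y$i \<noteq> 0}"
  by (rule open_Collect_neq) (auto intro: continuous_intros)

lemma homeo_left_inv:
  assumes "continuous_on S f" "continuous_on (f ` S) g" "\<And>x. x \<in> S \<Longrightarrow> g (f x) = x"
  shows "homeomorphism S (f ` S) f g"
  unfolding homeomorphism_def using assms by (auto simp: image_image)

lemma emb_generic:
  assumes "pv f" "open U" "\<And>x. (f has_derivative Df x) (at x)"
    "\<And>x h k. x \<in> U \<Longrightarrow> Df x h = Df x k \<Longrightarrow> h = k"
    "continuous_on (f ` U) g" "\<And>x. x \<in> U \<Longrightarrow> g (f x) = x"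
  shows "smooth_embedding U f"
proof -
  have cf: "continuous_on U f"
    using assms(3) by (metis continuous_at_imp_continuous_on has_derivative_continuous)
  show ?thesis unfolding smooth_embedding_def
  proof (intro conjI ballI exI)
    show "smooth_on U f" using pv_smooth assms by blast
    show "inj_on f U" by (metis assms(6) inj_onI)
    fix x assume "x \<in> U"
    then show "inj (frechet_derivative f (at x))"
      using frechet_derivative_at[OF assms(3)] assms(4) by (metis injI)
  next
    show "homeomorphism U (f ` U) f g" using homeo_left_inv cf assms by blast
  qed
qed

lemma pv_V1: "pv V1"
  unfolding pv_def forall_6 by (simp add: pf_nth pf_const)

lemma pv_V2: "pv V2"
  unfolding pv_def forall_6 by (simp; intro conjI pf_const pf_nth pf_add pf_mult pf_diff pf_minus pf_pow)

lemma pv_phi: "pv phi"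
  unfolding pv_def forall_6 by (simp; intro conjI pf_const pf_nth pf_add pf_mult pf_diff pf_minus pf_pow)

definition g1 :: "real^6 \<Rightarrow> real^3" where "g1 p = vector [p$3, p$1, p$2]"
definition g2 :: "real^6 \<Rightarrow> real^3" where
  "g2 p = vector [(p$3+p$6)/2, p$5, (1 - p$1 - p$4)/(p$3+p$6)]"
definition g3 :: "real^6 \<Rightarrow> real^2" where "g3 p = vector [p$3, (1 - p$1)/(2*p$3)]"

lemma emb_V1: "smooth_embedding U1 V1"
proof (rule emb_generic[OF pv_V1 _ V1_deriv, where g = g1])
  show "open U1" unfolding U1_def by (rule open_nz)
  show "continuous_on (V1 ` U1) g1"
  proof (rule cont_cart)
    fix i :: 3
    show "continuous_on (V1 ` U1) (\<lambda>x. g1 x $ i)"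
      using exhaust_3[of i] by (elim disjE) (simp_all add: g1_def continuous_on_nth')
  qed
qed (auto simp: vec6_eq vec3_eq g1_def)

lemma emb_V2: "smooth_embedding U2 V2"
proof (rule emb_generic[OF pv_V2 _ V2_deriv, where g = g2])
  show "open U2" unfolding U2_def by (rule open_nz)
  show "continuous_on (V2 ` U2) g2"
  proof (rule cont_cart)
    fix i :: 3
    have nz: "\<forall>p\<in>V2 ` U2. p$3 + p$6 \<noteq> 0" by (auto simp: U2_def)
    show "continuous_on (V2 ` U2) (\<lambda>x. g2 x $ i)"
      using exhaust_3[of i] nz by (elim disjE) (auto simp: g2_def intro!: continuous_intros)
  qed
next
  fix y h k assume y: "y \<in> U2" and e: "DV2 y h = DV2 y k"
  have u: "y$1 \<noteq> 0" using y by (simp add: U2_def)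
  have e3: "DV2 y h $ 3 = DV2 y k $ 3" and e6: "DV2 y h $ 6 = DV2 y k $ 6"
    and e5: "DV2 y h $ 5 = DV2 y k $ 5" and e1: "DV2 y h $ 1 = DV2 y k $ 1"
    and e4: "DV2 y h $ 4 = DV2 y k $ 4" using e by simp_all
  have h2: "h$2 = k$2" using e5 by simp
  have h1: "h$1 = k$1" using e3 e6 h2 by simp
  have s: "DV2 y q $ 1 + DV2 y q $ 4 = -2*(q$1*y$3 + y$1*q$3)" for q
    by (simp add: algebra_simps)
  have "-2*(h$1*y$3 + y$1*h$3) = -2*(k$1*y$3 + y$1*k$3)" using s[of h] s[of k] e1 e4 by simp
  then have "y$1 * h$3 = y$1 * k$3" using h1 by (simp add: algebra_simps) (metis)
  then have h3: "h$3 = k$3" using u by simp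
  show "h = k" using h1 h2 h3 by (simp add: vec3_eq)
next
  fix y assume y: "y \<in> U2"
  have u: "y$1 \<noteq> 0" using y by (simp add: U2_def)
  show "g2 (V2 y) = y" using u by (simp add: g2_def vec3_eq field_simps)
qed

lemma emb_phi: "smooth_embedding {z::real^2. z$1 \<noteq> 0} phi"
proof (rule emb_generic[OF pv_phi _ phi_deriv, where g = g3])
  show "open {z::real^2. z$1 \<noteq> 0}" by (rule open_nz)
  show "continuous_on (phi ` {z::real^2. z$1 \<noteq> 0}) g3"
  proof (rule cont_cart)
    fix i :: 2
    have nz: "\<forall>p\<in>phi ` {z::real^2. z$1 \<noteq> 0}. 2 * p$3 \<noteq> 0" by auto
    show "continuous_on (phi ` {z::real^2. z$1 \<noteq> 0}) (\<lambda>x. g3 x $ i)"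
      using exhaust_2[of i] nz by (elim disjE) (auto simp: g3_def intro!: continuous_intros)
  qed
next
  fix y h k assume y: "y \<in> {z::real^2. z$1 \<noteq> 0}" and e: "Dphi y h = Dphi y k"
  have u: "y$1 \<noteq> 0" using y by simp
  have e3: "Dphi y h $ 3 = Dphi y k $ 3" and e1: "Dphi y h $ 1 = Dphi y k $ 1" using e by simp_all
  have h1: "h$1 = k$1" using e3 by simp
  have "y$1 * h$2 = y$1 * k$2" using e1 h1 by (simp add: algebra_simps) (metis)
  then have h2: "h$2 = k$2" using u by auto
  show "h = k" using h1 h2 by (simp add: vec2_eq)
next
  fix y assume y: "y \<in> {z::real^2. z$1 \<noteq> 0}"
  have u: "y$1 \<noteq> 0" using y by simp
  show "g3 (phi y) = y" using u by (simp add: g3_def vec2_eq field_simps)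
qed


lemma ricci_s_eq: "ricci_s p x X Y = inverse ((x$1)^2) *
   (X$1*Y$1*((p$1 - p$4 + 1) * p$4 + p$2 * (p$6 - p$3))
  + (X$1*Y$2 + X$2*Y$1) * (((p$3 * p$4 - p$2 * p$5 + p$6) + (p$3 * (p$4 - 1) - p$2 * p$5))/2)
  + X$2*Y$2*(- ((p$3)^2) + p$6 * p$3 + (p$1 - p$4 - 1) * p$5))"
proof -
  obtain q where q: "inverse ((x$1)^2) = q" by blast
  show ?thesis unfolding ricci_s_def ricci_def Let_def q
    by (simp add: field_simps)
qed

lemma ricci_a_eq: "ricci_a p x X Y = inverse ((x$1)^2) * (X$1*Y$2 - X$2*Y$1) * ((p$3 + p$6)/2)"
proof -
  obtain q where q: "inverse ((x$1)^2) = q" by blast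
  show ?thesis unfolding ricci_a_def ricci_def Let_def q
    by (simp add: field_simps)
qed

lemma B_a_iff: "p \<in> B_a \<longleftrightarrow>
   (p$1 - p$4 + 1) * p$4 + p$2 * (p$6 - p$3) = 0 \<and>
   - ((p$3)^2) + p$6 * p$3 + (p$1 - p$4 - 1) * p$5 = 0 \<and>
   2 * p$3 * p$4 - p$3 - 2 * p$2 * p$5 + p$6 = 0 \<and> p$3 + p$6 \<noteq> 0"
  (is "_ \<longleftrightarrow> ?E1 \<and> ?E2 \<and> ?E3 \<and> ?N")
proof
  assume "p \<in> B_a"
  then have s: "\<And>x X Y. x$1 > 0 \<Longrightarrow> ricci_s p x X Y = 0"
    and a: "\<not> (\<forall>x X Y. x$1 > 0 \<longrightarrow> ricci_a p x X Y = 0)" by (auto simp: B_a_def)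
  let ?x = "vector [1, 0] :: real^2"
  let ?e1 = "vector [1, 0] :: real^2"
  let ?e2 = "vector [0, 1] :: real^2"
  have "ricci_s p ?x ?e1 ?e1 = 0" "ricci_s p ?x ?e2 ?e2 = 0" "ricci_s p ?x ?e1 ?e2 = 0"
    using s by auto
  then have "?E1" "?E2" "?E3" unfolding ricci_s_eq by (simp_all add: algebra_simps)
  moreover have "?N" using a unfolding ricci_a_eq by auto
  ultimately show "?E1 \<and> ?E2 \<and> ?E3 \<and> ?N" by blast
next
  assume h: "?E1 \<and> ?E2 \<and> ?E3 \<and> ?N"
  have "(p$3 * p$4 - p$2 * p$5 + p$6) + (p$3 * (p$4 - 1) - p$2 * p$5) = 0"
    using h by (simp add: algebra_simps)
  then have s: "ricci_s p x X Y = 0" for x X Y unfolding ricci_s_eq using h by simp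
  have r: "ricci_a p (vector [1, 0]) (vector [1, 0]) (vector [0, 1]) \<noteq> 0"
    unfolding ricci_a_eq using h by simp
  have "\<not> (\<forall>x X Y. x$1 > 0 \<longrightarrow> ricci_a p x X Y = 0)"
  proof
    assume H: "\<forall>x X Y. x$1 > 0 \<longrightarrow> ricci_a p x X Y = 0"
    have "(vector [1, 0] :: real^2) $ 1 > 0" by simp
    then have "ricci_a p (vector [1, 0]) (vector [1, 0]) (vector [0, 1]) = 0" using H by blast
    then show False using r by simp
  qed
  then show "p \<in> B_a" unfolding B_a_def using s by blast
qed

lemma alg2:
  fixes a b c d e f :: real
  assumes E1: "(a - d + 1) * d + b * (f - c) = 0"
    and E2: "- (c^2) + f * c + (a - d - 1) * e = 0"
    and E3: "2 * c * d - c - 2 * b * e + f = 0" and e: "e \<noteq> 0"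
  defines "u \<equiv> (c + f) / 2" and "w \<equiv> (f - c) / (2 * e)"
  shows "a = 1 - 2 * u * w + e * w^2 \<and> b = w * (1 - u * w + e * w^2) \<and> c = u - e * w
     \<and> d = - e * w^2 \<and> f = u + e * w"
proof -
  have "4*e*d + (f-c)^2 = 2*e*((a - d + 1) * d + b * (f - c)) - 2*d*(- (c^2) + f * c + (a - d - 1) * e)
      + (f-c)*(2 * c * d - c - 2 * b * e + f)"
    by (simp add: algebra_simps power2_eq_square)
  then have "4*e*d + (f-c)^2 = 0" using E1 E2 E3 by simp
  then have hd: "d = -((f-c)^2) / (4*e)" using e by (simp add: field_simps)
  have ha: "a = 1 + d + c * (c - f) / e" using E2 e by (simp add: field_simps power2_eq_square)
  have hb: "b = (2 * c * d - c + f) / (2 * e)" using E3 e by (simp add: field_simps)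
  show ?thesis unfolding u_def w_def using e
    by (simp add: ha hb hd field_simps power2_eq_square)
qed

lemma V1_in: "y$1 \<noteq> 0 \<Longrightarrow> V1 y \<in> B_a"
  unfolding B_a_iff by (simp add: power2_eq_square)

lemma V2_in: "y$1 \<noteq> 0 \<Longrightarrow> V2 y \<in> B_a"
  unfolding B_a_iff by (simp add: power2_eq_square algebra_simps)

lemma B_a_sub: assumes "p \<in> B_a" shows "p \<in> D1 \<union> D2"
proof -
  have E1: "(p$1 - p$4 + 1) * p$4 + p$2 * (p$6 - p$3) = 0"
   and E2: "- ((p$3)^2) + p$6 * p$3 + (p$1 - p$4 - 1) * p$5 = 0"
   and E3: "2 * p$3 * p$4 - p$3 - 2 * p$2 * p$5 + p$6 = 0" and N: "p$3 + p$6 \<noteq> 0"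
    using assms unfolding B_a_iff by auto
  show ?thesis
  proof (cases "p$5 = 0")
    case True
    then have "p$3 * (p$6 - p$3) = 0" using E2 by (simp add: algebra_simps power2_eq_square)
    moreover have "p$3 \<noteq> 0"
    proof
      assume "p$3 = 0" then have "p$6 = 0" using E3 True by simp
      then show False using N \<open>p$3 = 0\<close> by simp
    qed
    ultimately have f: "p$6 = p$3" by simp
    then have "p$4 = 0" using E3 True \<open>p$3 \<noteq> 0\<close> by simp
    then have "p = V1 (vector [p$3, p$1, p$2])" using True f by (simp add: vec6_eq)
    moreover have "vector [p$3, p$1, p$2] \<in> U1" using \<open>p$3 \<noteq> 0\<close> by (simp add: U1_def)
    ultimately show ?thesis unfolding D1_def by blast
  next
    case False
    note A = alg2[OF E1 E2 E3 False]
    let ?y = "vector [(p$3 + p$6)/2, p$5, (p$6 - p$3)/(2 * p$5)] :: real^3"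
    have "p = V2 ?y" using A by (simp add: vec6_eq)
    moreover have "?y \<in> U2" using N by (simp add: U2_def)
    ultimately show ?thesis unfolding D2_def by blast
  qed
qed

lemma B_a_eq: "B_a = D1 \<union> D2"
  using B_a_sub V1_in V2_in by (auto simp: D1_def D2_def U1_def U2_def)


lemma phi_V2: "phi z = V2 (vector [z$1, 0, z$2])"
  by (simp add: vec6_eq)

lemma phi_V1: "phi z = V1 (vector [z$1, 1 - 2*z$1*z$2, z$2 * (1 - z$1*z$2)])"
  by (simp add: vec6_eq)

lemma phi_image: "phi ` {z::real^2. z$1 \<noteq> 0} = D1 \<inter> D2"
proof
  show "phi ` {z::real^2. z$1 \<noteq> 0} \<subseteq> D1 \<inter> D2"
  proof
    fix p assume "p \<in> phi ` {z::real^2. z$1 \<noteq> 0}"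
    then obtain z where z: "z$1 \<noteq> 0" "p = phi z" by auto
    have "p \<in> D1" unfolding D1_def U1_def using z phi_V1[of z]
      by (intro image_eqI[of _ _ "vector [z$1, 1 - 2*z$1*z$2, z$2 * (1 - z$1*z$2)]"]) auto
    moreover have "p \<in> D2" unfolding D2_def U2_def using z phi_V2[of z]
      by (intro image_eqI[of _ _ "vector [z$1, 0, z$2]"]) auto
    ultimately show "p \<in> D1 \<inter> D2" by blast
  qed
next
  show "D1 \<inter> D2 \<subseteq> phi ` {z::real^2. z$1 \<noteq> 0}"
  proof
    fix p assume "p \<in> D1 \<inter> D2"
    then obtain y1 y2 where "p = V1 y1" "p = V2 y2" "y2$1 \<noteq> 0"
      unfolding D1_def D2_def U2_def by blast
    then have "y2$2 = 0" "p = V2 y2" "y2$1 \<noteq> 0"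
      by (metis V1_nth(5) V2_nth(5))+
    then have "p = phi (vector [y2$1, y2$3])" by (simp add: vec6_eq)
    then show "p \<in> phi ` {z::real^2. z$1 \<noteq> 0}" using \<open>y2$1 \<noteq> 0\<close> by auto
  qed
qed

lemma tangent_part:
  assumes y1: "y1 \<in> U1" and y2: "y2 \<in> U2" and z: "z \<in> {z::real^2. z$1 \<noteq> 0}"
    and e1: "V1 y1 = phi z" and e2: "V2 y2 = phi z"
  shows "tangent_at V1 y1 \<inter> tangent_at V2 y2 = tangent_at phi z"
proof -
  have "inj_on V2 U2" using emb_V2 by (simp add: smooth_embedding_def)
  moreover have "vector [z$1, 0, z$2] \<in> U2" using z by (simp add: U2_def)
  ultimately have yy: "y2 = vector [z$1, 0, z$2]" using y2 e2 phi_V2[of z] by (metis inj_onD)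
  have T1: "tangent_at V1 y1 = range V1"
    unfolding tangent_at_def using frechet_derivative_at[OF V1_deriv] by metis
  have T2: "tangent_at V2 y2 = range (DV2 y2)"
    unfolding tangent_at_def using frechet_derivative_at[OF V2_deriv] by metis
  have T3: "tangent_at phi z = range (Dphi z)"
    unfolding tangent_at_def using frechet_derivative_at[OF phi_deriv] by metis
  have "range V1 \<inter> range (DV2 y2) = range (Dphi z)"
  proof
    show "range V1 \<inter> range (DV2 y2) \<subseteq> range (Dphi z)"
    proof
      fix q assume "q \<in> range V1 \<inter> range (DV2 y2)"
      then obtain h k where "q = V1 h" "q = DV2 y2 k" by blast
      then have k2: "k$2 = 0" by (metis V1_nth(5) DV2_nth(5))
      have "q = Dphi z (vector [k$1, k$3])" using \<open>q = DV2 y2 k\<close> k2 yy by (simp add: vec6_eq)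
      then show "q \<in> range (Dphi z)" by auto
    qed
  next
    show "range (Dphi z) \<subseteq> range V1 \<inter> range (DV2 y2)"
    proof
      fix q assume "q \<in> range (Dphi z)"
      then obtain k where q: "q = Dphi z k" by auto
      have "q = DV2 y2 (vector [k$1, 0, k$2])" using q yy by (simp add: vec6_eq)
      moreover have "q = V1 (vector [k$1, Dphi z k $ 1, Dphi z k $ 2])" using q by (simp add: vec6_eq)
      ultimately show "q \<in> range V1 \<inter> range (DV2 y2)" by blast
    qed
  qed
  then show ?thesis using T1 T2 T3 by simp
qed

theorem theorem1p7:
  shows "B_a = D1 \<union> D2
    \<and> smooth_embedding U1 V1
    \<and> smooth_embedding U2 V2
    \<and> (\<exists>(U :: (real^2) set) (\<phi> :: real^2 \<Rightarrow> real^6).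
          smooth_embedding U \<phi> \<and> \<phi> ` U = D1 \<inter> D2 \<and>
          (\<forall>y1\<in>U1. \<forall>y2\<in>U2. \<forall>z\<in>U. V1 y1 = \<phi> z \<longrightarrow> V2 y2 = \<phi> z \<longrightarrow>
              tangent_at V1 y1 \<inter> tangent_at V2 y2 = tangent_at \<phi> z))"
  using B_a_eq emb_V1 emb_V2 emb_phi phi_image tangent_part by blast

end
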